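(* Let $B$ be a commutative ring with identity and $A$ a dense subring of $B$. Then the map $i^*:\operatorname{spec} B\to\operatorname{spec} A$, $i^*(P)=P\cap A$, is one-one.
   Context: All rings are commutative with identity; subrings contain the identity. A subring $A$ of $B$ is dense in $B$ if for every ideal $I$ of $B$ and every $b\in B\setminus \operatorname{rad}(I)$ there exists $a\in B\setminus\operatorname{rad}(I)$ with $ab\in A$. *)

theory Defs
  imports "HOL-Algebra.Algebra"
begin

definition rad :: "('a, 'b) ring_scheme \<Rightarrow> 'a set \<Rightarrow> 'a set" where
  "rad R I = {x \<in> carrier R. \<exists>n::nat. x [^]\<^bsub>R\<^esub> n \<in> I}"

definition dense_subring :: "'a set \<Rightarrow> ('a, 'b) ring_scheme \<Rightarrow> bool" where
  "dense_subring A B \<longleftrightarrow> subring A B \<and>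
     (\<forall>I. ideal I B \<longrightarrow>
        (\<forall>b \<in> carrier B - rad B I. \<exists>a \<in> carrier B - rad B I. a \<otimes>\<^bsub>B\<^esub> b \<in> A))"

end

theory Submission
  imports Defs
begin

lemma prime_pow_mem:
  assumes "primeideal P B" "b \<in> carrier B"
  shows "b [^]\<^bsub>B\<^esub> (n::nat) \<in> P \<Longrightarrow> b \<in> P"
proof (induction n)
  case 0
  then have "\<one>\<^bsub>B\<^esub> \<in> P" by simp
  then have "P = carrier B"
    using assms(1) by (meson ideal.one_imp_carrier primeideal.axioms(1))
  then show ?case using assms(1) primeideal.I_notcarr by metis
next
  case (Suc n)
  interpret primeideal P B by fact
  have "b [^]\<^bsub>B\<^esub> n \<otimes>\<^bsub>B\<^esub> b \<in> P" using Suc.prems by simp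
  then have "b [^]\<^bsub>B\<^esub> n \<in> P \<or> b \<in> P"
    using I_prime assms(2) by simp
  then show ?case using Suc.IH by blast
qed

lemma one_dir:
  assumes "dense_subring A B" "primeideal P B" "primeideal Q B" "P \<inter> A = Q \<inter> A"
  shows "P \<subseteq> Q"
proof
  fix b assume bP: "b \<in> P"
  interpret P: primeideal P B by fact
  interpret Q: primeideal Q B by fact
  have bc: "b \<in> carrier B" using bP P.Icarr by blast
  show "b \<in> Q"
  proof (rule ccontr)
    assume bQ: "b \<notin> Q"
    have "b \<notin> rad B Q" using prime_pow_mem[OF assms(3) bc] bQ unfolding rad_def by blast
    then obtain a where a: "a \<in> carrier B - rad B Q" "a \<otimes>\<^bsub>B\<^esub> b \<in> A"
      using assms(1) Q.is_ideal bc unfolding dense_subring_def by blast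
    have aQ: "a \<notin> Q"
    proof
      assume "a \<in> Q"
      then have "a [^]\<^bsub>B\<^esub> (1::nat) \<in> Q" using a(1) by simp
      then show False using a(1) unfolding rad_def by blast
    qed
    have "a \<otimes>\<^bsub>B\<^esub> b \<in> P" using P.I_l_closed bP a(1) by blast
    then have "a \<otimes>\<^bsub>B\<^esub> b \<in> Q" using a(2) assms(4) by blast
    then show False using Q.I_prime a(1) bc aQ bQ by blast
  qed
qed

theorem theorem3p3:
  fixes B :: "('a, 'b) ring_scheme" and A :: "'a set"
  assumes "cring B"
    and "subring A B"
    and "dense_subring A B"
  shows "inj_on (\<lambda>P. P \<inter> A) {P. primeideal P B}"
  unfolding inj_on_def
  using one_dir[OF assms(3)] by (metis equalityI mem_Collect_eq)

end
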